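(* Let $z \in \mathbb{R}$ with $|z| > 1$, and for $k \ge 0$ define \[ \mathrm{BF}_{01}(z; k) = \sqrt{1+k}\,\exp\left\{-\frac{z^2 k}{2(1+k)}\right\}. \] Then there exists a unique $k^* > 0$ such that $\mathrm{BF}_{01}(z; k^* ) = 1$. Moreover, $k^*$ satisfies \[ (1+k^* )\ln(1+k^* ) = z^2 k^*. \] Furthermore, for $0 < k < k^*$ one has $\mathrm{BF}_{01}(z; k) < 1$, and for $k > k^*$ one has $\mathrm{BF}_{01}(z; k) > 1$.
   Context: Setting: $X_1,\dots,X_n$ i.i.d. $\mathcal{N}(\mu,1)$, testing $H_0:\mu=0$ versus $H_1:\mu\neq 0$, with prior $\mu\mid H_1\sim\mathcal{N}(0,\tau^2)$, $\tau^2>0$. With $z=\sqrt{n}\,\bar x$ and $k = n\tau^2$, the Bayes factor in favour of $H_0$ is $\mathrm{BF}_{01}(z;k)$ as defined in the claim. The value $k^*$ is called the flip point; $\mathrm{BF}_{01}<1$ is interpreted as evidence for $H_1$ and $\mathrm{BF}_{01}>1$ as evidence for $H_0$. *)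

theory Defs
  imports Complex_Main
begin

definition BF01 :: "real \<Rightarrow> real \<Rightarrow> real" where
  "BF01 z k = sqrt (1 + k) * exp (- (z\<^sup>2 * k) / (2 * (1 + k)))"

end

theory Submission
  imports Defs
begin

definition gg :: "real \<Rightarrow> real \<Rightarrow> real" where
  "gg c k = (1 + k) * ln (1 + k) - c * k"

lemma gg_der: "x > -1 \<Longrightarrow> DERIV (gg c) x :> ln (1 + x) + 1 - c"
  unfolding gg_def
  by (auto intro!: derivative_eq_intros simp: field_simps)

lemma gg_cont: "a \<ge> 0 \<Longrightarrow> continuous_on {a..b} (gg c)"
  by (rule DERIV_continuous_on[where D="\<lambda>x. ln (1 + x) + 1 - c"]) (auto intro!: has_field_derivative_at_within gg_der)

lemma gg_dec:
  assumes "0 \<le> a" "a < b" "b \<le> exp (c - 1) - 1"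
  shows "gg c b < gg c a"
proof (rule DERIV_neg_imp_decreasing_open[OF assms(2) _ gg_cont[OF assms(1)]])
  fix x assume x: "a < x" "x < b"
  have "1 + x < exp (c - 1)" using x assms by auto
  moreover have "0 < 1 + x" using x assms by simp
  ultimately have "ln (1 + x) < ln (exp (c - 1))" by (simp only: ln_less_cancel_iff exp_gt_zero)
  hence "ln (1 + x) < c - 1" by simp
  thus "\<exists>y. DERIV (gg c) x :> y \<and> y < 0" using gg_der[of x c] x assms by auto
qed

lemma gg_inc:
  assumes "exp (c - 1) - 1 \<le> a" "a < b" "c \<ge> 1"
  shows "gg c a < gg c b"
proof (rule DERIV_pos_imp_increasing_open[OF assms(2) _ gg_cont])
  have "1 \<le> exp (c - 1)" using assms(3) by simp
  thus a0: "0 \<le> a" using assms by linarith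
  fix x assume x: "a < x" "x < b"
  have "exp (c - 1) < 1 + x" using x assms by auto
  moreover have "0 < exp (c - 1)" by simp
  ultimately have "ln (exp (c - 1)) < ln (1 + x)" by (simp only: ln_less_cancel_iff)
  hence "c - 1 < ln (1 + x)" by simp
  thus "\<exists>y. DERIV (gg c) x :> y \<and> y > 0" using gg_der[of x c] x a0
    by auto
qed

lemma BF_exp:
  assumes "k > 0"
  shows "BF01 z k = exp (gg (z\<^sup>2) k / (2 * (1 + k)))"
proof -
  have "sqrt (1 + k) = exp (ln (1 + k) / 2)"
    using assms by (simp add: powr_half_sqrt[symmetric] powr_def)
  hence "BF01 z k = exp (ln (1 + k) / 2 + - (z\<^sup>2 * k) / (2 * (1 + k)))"
    unfolding BF01_def by (simp add: exp_add[symmetric])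
  also have "ln (1 + k) / 2 + - (z\<^sup>2 * k) / (2 * (1 + k)) = gg (z\<^sup>2) k / (2 * (1 + k))"
    using assms unfolding gg_def by (simp add: field_simps)
  finally show ?thesis .
qed

lemma BF_lt: "k > 0 \<Longrightarrow> BF01 z k < 1 \<longleftrightarrow> gg (z\<^sup>2) k < 0"
  by (simp add: BF_exp divide_less_0_iff)
lemma BF_gt: "k > 0 \<Longrightarrow> BF01 z k > 1 \<longleftrightarrow> gg (z\<^sup>2) k > 0"
  by (simp add: BF_exp zero_less_divide_iff)
lemma BF_eq: "k > 0 \<Longrightarrow> BF01 z k = 1 \<longleftrightarrow> gg (z\<^sup>2) k = 0"
  by (simp add: BF_exp)

theorem theorem1:
  fixes z :: real
  assumes "\<bar>z\<bar> > 1"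
  shows "\<exists>ks. ks > 0 \<and> BF01 z ks = 1
           \<and> (\<forall>k. k > 0 \<and> BF01 z k = 1 \<longrightarrow> k = ks)
           \<and> (1 + ks) * ln (1 + ks) = z\<^sup>2 * ks
           \<and> (\<forall>k. 0 < k \<and> k < ks \<longrightarrow> BF01 z k < 1)
           \<and> (\<forall>k. k > ks \<longrightarrow> BF01 z k > 1)"
proof -
  define c where "c = z\<^sup>2"
  have c1: "c > 1" unfolding c_def using assms
    by (metis abs_ge_zero less_1_mult power2_abs power2_eq_square)
  define m where "m = exp (c - 1) - 1"
  have ec: "exp (c - 1) > c" using exp_minus_greater[of "1 - c"] c1 by simp
  hence m0: "m > 0" unfolding m_def using c1 by simp
  define M where "M = exp c - 1"
  have "exp (c - 1) < exp c" by simp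
  hence mM: "m < M" unfolding m_def M_def by simp
  have gm: "gg c m < 0" unfolding gg_def m_def using ec by (simp add: algebra_simps)
  have gM: "gg c M > 0" unfolding gg_def M_def using c1 by (simp add: algebra_simps)
  have "\<exists>x. m \<le> x \<and> x \<le> M \<and> gg c x = 0"
    using IVT'[of "gg c" m 0 M] gm gM mM gg_cont[of m M c] m0 by auto
  then obtain ks where ks: "m \<le> ks" "ks \<le> M" "gg c ks = 0" by blast
  have ksm: "m < ks" using ks gm by (cases "m = ks") auto
  have low: "gg c k < 0" if "0 < k" "k < ks" for k
  proof (cases "k \<le> m")
    case True
    have "gg c k < gg c 0" using gg_dec[of 0 k c] that True unfolding m_def by simp
    thus ?thesis by (simp add: gg_def)
  next
    case False
    thus ?thesis using gg_inc[of c k ks] c1 that ks unfolding m_def by simp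
  qed
  have high: "gg c k > 0" if "k > ks" for k
    using gg_inc[of c ks k] c1 that ks ksm unfolding m_def by simp
  have ks0: "ks > 0" using m0 ksm by simp
  show ?thesis
  proof (intro exI[of _ ks] conjI allI impI)
    show "ks > 0" by fact
    show "BF01 z ks = 1" using BF_eq[OF ks0, of z] ks c_def by simp
    show "(1 + ks) * ln (1 + ks) = z\<^sup>2 * ks" using ks unfolding gg_def c_def by simp
    fix k
    show "0 < k \<and> k < ks \<Longrightarrow> BF01 z k < 1" using BF_lt low c_def by auto
    show "ks < k \<Longrightarrow> 1 < BF01 z k" using BF_gt[of k z] high c_def ks0 by auto
    show "0 < k \<and> BF01 z k = 1 \<Longrightarrow> k = ks"
      using BF_eq[of k z] low[of k] high[of k] c_def
      by (metis linorder_neq_iff less_irrefl)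
  qed
qed

end
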